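(* Let $P$ be a program context and let ${\mathcal{V}}, \mathcal{W}$ be sets of variables such that $P \in \mathcal{E}_{{\mathcal{V}}}$ and $P \in \mathcal{E}_{\mathcal{W}}$ (open evaluation contexts). Then ${\mathcal{V}} = \mathcal{W}$.
   Context: Syntax (split presentation). Terms: $t,u,s ::= x \mid \lambda x.t \mid t\,u$ (ordinary $\lambda$-terms over a countable set of variables). Values: $v,w ::= \lambda x.t$ (variables are not values). Environments: $E ::= \epsilon \mid E[x\leftarrow t]$ (lists of explicit substitutions, ES). Programs: $p ::= (t,E)$. In $E[x\leftarrow t]$ and $(u,E[x\leftarrow t])$ the variable $x$ is bound in $E$ and $u$; everything is up to $\alpha$-renaming, and appended ES are always assumed to bind fresh variables (Barendregt's convention). Appending an ES to a program: $(t,E)@[x\leftarrow u] := (t,E[x\leftarrow u])$. Inert terms and fireballs: $i ::= x \mid i\,f$, $f ::= v \mid i$. Open term evaluation contexts: $\mathcal{H} ::= \langle\cdot\rangle \mid \mathcal{H}\,t \mid i\,\mathcal{H}$ (with $i$ inert). Term contexts in general: $C ::= \langle\cdot\rangle \mid C\,t \mid t\,C$. Environment contexts: $G ::= E[x\leftarrow C] \mid G[x\leftarrow u]$. Program contexts: $P ::= (C,E) \mid (t,G)$. Appending an ES to a program context: $(C,E)@[x\leftarrow u] := (C,E[x\leftarrow u])$, $(t,G)@[x\leftarrow u] := (t,G[x\leftarrow u])$. Plugging a program into a program context: $(C,E)\langle (t,E')\rangle := (C\langle t\rangle, E'E)$; $(u,E[x\leftarrow C])\langle (t,E')\rangle :=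 (u, E[x\leftarrow C\langle t\rangle]E')$; $(u,G[x\leftarrow s])\langle (t,E)\rangle := ((u,G)\langle(t,E)\rangle)@[x\leftarrow s]$. Plugging a term $t$ into $P$ means $P\langle t\rangle := P\langle (t,\epsilon)\rangle$. For a program $p=(t,E)$ and a head context $\mathcal{H}$, $p@[x\leftarrow\mathcal{H}]$ denotes the program context $(t,E[x\leftarrow\mathcal{H}])$. Needed variables: $nv(x)=\{x\}$, $nv(\lambda x.t)=\emptyset$, $nv(t\,u)=nv(t)\cup nv(u)$; $nv((t,\epsilon))=nv(t)$, and $nv((t,E[x\leftarrow u]))=nv((t,E))$ if $x\notin nv((t,E))$, and $=(nv((t,E))\setminus\{x\})\cup nv(u)$ if $x\in nv((t,E))$. For term contexts: $nv(\langle\cdot\rangle)=\emptyset$, $nv(\mathcal{H}\,t)=nv(\mathcal{H})$, $nv(i\,\mathcal{H})=nv(i)\cup nv(\mathcal{H})$. Open evaluation contexts: the relation $P\in\mathcal{E}_{{\mathcal{V}}}$ ($P$ is an open evaluation context with needed variables ${\mathcal{V}}$) is inductively defined by: (ax) $(\mathcal{H},\epsilon)\in\mathcal{E}_{nv(\mathcal{H})}$; (inert) if $P\in\mathcal{E}_{{\mathcal{V}}}$ and $x\in{\mathcal{V}}$ then $P@[x\leftarrow i]\in\mathcal{E}_{({\mathcal{V}}\setminus\{x\})\cup nv(i)}$ for $i$ inert; (gc) if $P\in\mathcal{E}_{{\mathcal{V}}}$ and $x\notin{\mathcal{V}}$ then $P@[x\leftarrow t]\in\mathcal{E}_{{\mathcal{V}}}$;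 (her) if $P\in\mathcal{E}_{{\mathcal{V}}}$ and $x\notin{\mathcal{V}}$ then $P\langle x\rangle@[x\leftarrow\mathcal{H}]\in\mathcal{E}_{{\mathcal{V}}\cup nv(\mathcal{H})}$. In the last three rules $x$ is not in the domain of $P$. *)

theory Defs
  imports Main "HOL-Library.Countable" "HOL-Library.Infinite_Typeclass"
begin

datatype 'v trm = Var 'v | Lam 'v "'v trm" | App "'v trm" "'v trm"

text \<open>Environments: Eps is the empty environment; ES E x t is E[x<-t]
  (the new substitution is appended on the right).\<close>
datatype 'v env = Eps | ES "'v env" 'v "'v trm"

type_synonym 'v prog = "'v trm \<times> 'v env"

fun env_cat :: "'v env \<Rightarrow> 'v env \<Rightarrow> 'v env" where
  "env_cat E' Eps = E'"
| "env_cat E' (ES E x t) = ES (env_cat E' E) x t"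

datatype 'v ctx = Hole | CAppL "'v ctx" "'v trm" | CAppR "'v trm" "'v ctx"

datatype 'v genv = GHole "'v env" 'v "'v ctx" | GES "'v genv" 'v "'v trm"

datatype 'v pctx = PC "'v ctx" "'v env" | PG "'v trm" "'v genv"

fun is_value :: "'v trm \<Rightarrow> bool" where
  "is_value (Lam x t) = True"
| "is_value _ = False"

inductive inert :: "'v trm \<Rightarrow> bool" and fireball :: "'v trm \<Rightarrow> bool" where
  inert_var: "inert (Var x)"
| inert_app: "inert i \<Longrightarrow> fireball f \<Longrightarrow> inert (App i f)"
| fireball_val: "is_value v \<Longrightarrow> fireball v"
| fireball_inert: "inert i \<Longrightarrow> fireball i"

inductive head_ctx :: "'v ctx \<Rightarrow> bool" where
  "head_ctx Hole"
| "head_ctx H \<Longrightarrow> head_ctx (CAppL H t)"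
| "inert i \<Longrightarrow> head_ctx H \<Longrightarrow> head_ctx (CAppR i H)"

fun plug :: "'v ctx \<Rightarrow> 'v trm \<Rightarrow> 'v trm" where
  "plug Hole t = t"
| "plug (CAppL C u) t = App (plug C t) u"
| "plug (CAppR u C) t = App u (plug C t)"

fun prog_app :: "'v prog \<Rightarrow> 'v \<Rightarrow> 'v trm \<Rightarrow> 'v prog" where
  "prog_app (t, E) x u = (t, ES E x u)"

fun pctx_app :: "'v pctx \<Rightarrow> 'v \<Rightarrow> 'v trm \<Rightarrow> 'v pctx" where
  "pctx_app (PC C E) x u = PC C (ES E x u)"
| "pctx_app (PG t G) x u = PG t (GES G x u)"

fun gplug :: "'v trm \<Rightarrow> 'v genv \<Rightarrow> 'v prog \<Rightarrow> 'v prog" where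
  "gplug u (GHole E x C) (t, E') = (u, env_cat (ES E x (plug C t)) E')"
| "gplug u (GES G x s) p = prog_app (gplug u G p) x s"

fun pplug :: "'v pctx \<Rightarrow> 'v prog \<Rightarrow> 'v prog" where
  "pplug (PC C E) (t, E') = (plug C t, env_cat E' E)"
| "pplug (PG u G) p = gplug u G p"

fun prog_app_ctx :: "'v prog \<Rightarrow> 'v \<Rightarrow> 'v ctx \<Rightarrow> 'v pctx" where
  "prog_app_ctx (t, E) x H = PG t (GHole E x H)"

fun env_dom :: "'v env \<Rightarrow> 'v set" where
  "env_dom Eps = {}"
| "env_dom (ES E x t) = insert x (env_dom E)"

fun genv_dom :: "'v genv \<Rightarrow> 'v set" where
  "genv_dom (GHole E x C) = insert x (env_dom E)"
| "genv_dom (GES G x t) = insert x (genv_dom G)"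

fun pctx_dom :: "'v pctx \<Rightarrow> 'v set" where
  "pctx_dom (PC C E) = env_dom E"
| "pctx_dom (PG t G) = genv_dom G"

fun nv :: "'v trm \<Rightarrow> 'v set" where
  "nv (Var x) = {x}"
| "nv (Lam x t) = {}"
| "nv (App t u) = nv t \<union> nv u"

fun nv_prog :: "'v trm \<Rightarrow> 'v env \<Rightarrow> 'v set" where
  "nv_prog t Eps = nv t"
| "nv_prog t (ES E x u) =
     (if x \<notin> nv_prog t E then nv_prog t E else (nv_prog t E - {x}) \<union> nv u)"

text \<open>Needed variables of a head context (nv(hole) = {}, nv(H t) = nv(H),
  nv(i H) = nv(i) \<union> nv(H)); only used on head contexts.\<close>
fun nv_ctx :: "'v ctx \<Rightarrow> 'v set" where
  "nv_ctx Hole = {}"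
| "nv_ctx (CAppL H t) = nv_ctx H"
| "nv_ctx (CAppR i H) = nv i \<union> nv_ctx H"

section \<open>Open evaluation contexts: evctx P V means P \<in> E_V\<close>

inductive evctx :: "'v pctx \<Rightarrow> 'v set \<Rightarrow> bool" where
  ax: "head_ctx H \<Longrightarrow> evctx (PC H Eps) (nv_ctx H)"
| inert: "evctx P V \<Longrightarrow> x \<in> V \<Longrightarrow> x \<notin> pctx_dom P \<Longrightarrow> inert i \<Longrightarrow>
          evctx (pctx_app P x i) ((V - {x}) \<union> nv i)"
| gc: "evctx P V \<Longrightarrow> x \<notin> V \<Longrightarrow> x \<notin> pctx_dom P \<Longrightarrow>
          evctx (pctx_app P x t) V"
| her: "evctx P V \<Longrightarrow> x \<notin> V \<Longrightarrow> x \<notin> pctx_dom P \<Longrightarrow> head_ctx H \<Longrightarrow>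
          evctx (prog_app_ctx (pplug P (Var x, Eps)) x H) (V \<union> nv_ctx H)"

end

theory Submission
  imports Defs
begin

lemma nv_plug: "x \<in> nv (plug H (Var x))"
  by (induction H) auto

lemma nv_fin: "finite (nv t)"
  by (induction t) auto

lemma nv_ctx_fin: "finite (nv_ctx H)"
  by (induction H) (auto simp: nv_fin)

lemma env_dom_fin: "finite (env_dom E)"
  by (induction E) auto

lemma genv_dom_fin: "finite (genv_dom G)"
  by (induction G) (auto simp: env_dom_fin)

lemma pctx_dom_fin: "finite (pctx_dom P)"
  by (cases P) (auto simp: env_dom_fin genv_dom_fin)

lemma evctx_fin: "evctx P V \<Longrightarrow> finite V"
  by (induction rule: evctx.induct) (auto simp: nv_fin nv_ctx_fin)

lemma head_inj:
  assumes "head_ctx H" "head_ctx H'" "plug H (Var x) = plug H' (Var y)"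
    "y \<notin> nv_ctx H" "x \<notin> nv_ctx H'"
  shows "H = H' \<and> x = y"
  using assms
proof (induction H arbitrary: H' rule: head_ctx.induct)
  case 1
  then show ?case by (cases H') auto
next
  case (2 H t)
  from 2(3) show ?case
  proof cases
    case 1
    then show ?thesis using 2(4) by simp
  next
    case (2 H2 t2)
    then show ?thesis using \<open>head_ctx H\<close> "2.IH" "2.prems" by auto
  next
    case (3 i H2)
    then show ?thesis using "2.prems" nv_plug[of x H] by auto
  qed
next
  case (3 i H)
  from 3(4) show ?case
  proof cases
    case 1
    then show ?thesis using 3(5) by simp
  next
    case (2 H2 t2)
    then show ?thesis using "3.prems" nv_plug[of y H2] by auto
  next
    case (3 i2 H2)
    then show ?thesis using \<open>head_ctx H\<close> "3.IH" "3.prems" by auto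
  qed
qed

lemma pplug_app: "pplug (pctx_app P z u) (Var x, Eps) = prog_app (pplug P (Var x, Eps)) z u"
  by (cases P) auto

lemma dom_app: "pctx_dom (pctx_app P z u) = insert z (pctx_dom P)"
  by (cases P) auto

lemma pplug_her: "pplug (prog_app_ctx p w H) (Var x, Eps) = (fst p, ES (snd p) w (plug H (Var x)))"
  by (cases p) auto

lemma dom_her: "pctx_dom (prog_app_ctx p w H) = insert w (env_dom (snd p))"
  by (cases p) auto

lemma L1: "pplug (pctx_app P z u) (Var x, Eps) = (fst (pplug P (Var x, Eps)), ES (snd (pplug P (Var x, Eps))) z u)"
  by (cases "pplug P (Var x, Eps)") (simp add: pplug_app)

lemma L3: "pplug (PC H Eps) (Var x, Eps) = (plug H (Var x), Eps)"
  by simp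

lemma main:
  shows "evctx P V \<Longrightarrow> evctx P' V' \<Longrightarrow> x \<notin> pctx_dom P \<Longrightarrow> y \<notin> pctx_dom P' \<Longrightarrow> y \<notin> V \<Longrightarrow> x \<notin> V'
    \<Longrightarrow> pplug P (Var x, Eps) = pplug P' (Var y, Eps) \<Longrightarrow> P = P' \<and> x = y \<and> V = V'"
proof (induction arbitrary: P' V' x y rule: evctx.induct)
  case (ax H)
  note pr = ax.prems and hy = ax.hyps
  from pr(1) show ?case
  proof cases
    case (ax H')
    have e: "plug H (Var x) = plug H' (Var y)" using pr(6) unfolding ax(1) L3 by simp
    have "H = H' \<and> x = y"
      by (rule head_inj[OF hy ax(3) e]) (use pr(4,5) ax(2) in simp_all)
    then show ?thesis using ax(1,2) by simp
  next
    case (inert P1 V1 z i)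
    have False using pr(6) unfolding inert(1) L3 L1 by simp
    then show ?thesis ..
  next
    case (gc P1 z t)
    have False using pr(6) unfolding gc(1) L3 L1 by simp
    then show ?thesis ..
  next
    case (her P1 V1 z H')
    have False using pr(6) unfolding her(1) L3 pplug_her by simp
    then show ?thesis ..
  qed
next
  case (inert P V z i)
  note pr = inert.prems and hy = inert.hyps and IH = inert.IH
  have tE: "pplug (pctx_app P z i) (Var x, Eps) = (fst (pplug P (Var x, Eps)), ES (snd (pplug P (Var x, Eps))) z i)"
    by (rule L1)
  from pr(1) show ?case
  proof cases
    case (ax H')
    have False using pr(6) unfolding ax(1) L3 tE by simp
    then show ?thesis ..
  next
    case (inert P1 V1 z1 i1)
    have eq: "z = z1" "i = i1" "pplug P (Var x, Eps) = pplug P1 (Var y, Eps)"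
      using pr(6) unfolding tE inert(1) L1 by (auto simp: prod_eq_iff)
    have "y \<noteq> z1" using pr(3) unfolding inert(1) dom_app by simp
    have "P = P1 \<and> x = y \<and> V = V1"
    proof (rule IH[OF inert(3)])
      show "x \<notin> pctx_dom P" using pr(2) unfolding dom_app by simp
      show "y \<notin> pctx_dom P1" using pr(3) unfolding inert(1) dom_app by simp
      show "y \<notin> V" using pr(4) \<open>y \<noteq> z1\<close> eq(1) by simp
      show "x \<notin> V1" using pr(5) inert(2) pr(2) eq(1) unfolding dom_app by simp
    qed (rule eq(3))
    then show ?thesis using inert(1,2) eq(1,2) by simp
  next
    case (gc P1 z1 t1)
    have eq: "z = z1" "i = t1" "pplug P (Var x, Eps) = pplug P1 (Var y, Eps)"
      using pr(6) unfolding tE gc(1) L1 by (auto simp: prod_eq_iff)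
    have "y \<noteq> z1" using pr(3) unfolding gc(1) dom_app by simp
    have "P = P1 \<and> x = y \<and> V = V'"
    proof (rule IH[OF gc(2)])
      show "x \<notin> pctx_dom P" using pr(2) unfolding dom_app by simp
      show "y \<notin> pctx_dom P1" using pr(3) unfolding gc(1) dom_app by simp
      show "y \<notin> V" using pr(4) \<open>y \<noteq> z1\<close> eq(1) by simp
      show "x \<notin> V'" using pr(5) .
    qed (rule eq(3))
    then have False using hy(2) gc(3) eq(1) by simp
    then show ?thesis ..
  next
    case (her P1 V1 w H)
    have eq: "w = z" "i = plug H (Var y)"
      using pr(6) unfolding tE her(1) pplug_her by (auto simp: prod_eq_iff)
    have "y \<in> nv i" using eq nv_plug by metis
    then show ?thesis using pr(4) by simp
  qed
next
  case (gc P V z u)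
  note pr = gc.prems and hy = gc.hyps and IH = gc.IH
  have tE: "pplug (pctx_app P z u) (Var x, Eps) = (fst (pplug P (Var x, Eps)), ES (snd (pplug P (Var x, Eps))) z u)"
    by (rule L1)
  from pr(1) show ?case
  proof cases
    case (ax H')
    have False using pr(6) unfolding ax(1) L3 tE by simp
    then show ?thesis ..
  next
    case (inert P1 V1 z1 i1)
    have eq: "z = z1" "u = i1" "pplug P (Var x, Eps) = pplug P1 (Var y, Eps)"
      using pr(6) unfolding tE inert(1) L1 by (auto simp: prod_eq_iff)
    have "y \<noteq> z1" using pr(3) unfolding inert(1) dom_app by simp
    have "P = P1 \<and> x = y \<and> V = V1"
    proof (rule IH[OF inert(3)])
      show "x \<notin> pctx_dom P" using pr(2) unfolding dom_app by simp
      show "y \<notin> pctx_dom P1" using pr(3) unfolding inert(1) dom_app by simp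
      show "y \<notin> V" using pr(4) .
      show "x \<notin> V1" using pr(5) inert(2) pr(2) eq(1) unfolding dom_app by simp
    qed (rule eq(3))
    then have False using hy(2) inert(4) eq(1) by simp
    then show ?thesis ..
  next
    case (gc P1 z1 t1)
    have eq: "z = z1" "u = t1" "pplug P (Var x, Eps) = pplug P1 (Var y, Eps)"
      using pr(6) unfolding tE gc(1) L1 by (auto simp: prod_eq_iff)
    have "P = P1 \<and> x = y \<and> V = V'"
    proof (rule IH[OF gc(2)])
      show "x \<notin> pctx_dom P" using pr(2) unfolding dom_app by simp
      show "y \<notin> pctx_dom P1" using pr(3) unfolding gc(1) dom_app by simp
      show "y \<notin> V" using pr(4) .
      show "x \<notin> V'" using pr(5) .
    qed (rule eq(3))
    then show ?thesis using gc(1) eq(1,2) by simp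
  next
    case (her P1 V1 w H)
    have eq: "w = z" "u = plug H (Var y)" "pplug P (Var x, Eps) = pplug P1 (Var w, Eps)"
      using pr(6) unfolding tE her(1) pplug_her by (auto simp: prod_eq_iff)
    have "P = P1 \<and> x = w \<and> V = V1"
    proof (rule IH[OF her(3)])
      show "x \<notin> pctx_dom P" using pr(2) unfolding dom_app by simp
      show "w \<notin> pctx_dom P1" using her(5) .
      show "w \<notin> V" using hy(2) eq(1) by simp
      show "x \<notin> V1" using pr(5) her(2) by simp
    qed (rule eq(3))
    moreover have "x \<noteq> z" using pr(2) unfolding dom_app by simp
    ultimately show ?thesis using eq(1) by simp
  qed
next
  case (her P V w H)
  note pr = her.prems and hy = her.hyps and IH = her.IH
  have tE: "pplug (prog_app_ctx (pplug P (Var w, Eps)) w H) (Var x, Eps)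
     = (fst (pplug P (Var w, Eps)), ES (snd (pplug P (Var w, Eps))) w (plug H (Var x)))"
    by (rule pplug_her)
  from pr(1) show ?case
  proof cases
    case (ax H')
    have False using pr(6) unfolding ax(1) L3 tE by simp
    then show ?thesis ..
  next
    case (inert P1 V1 z1 i1)
    have eq: "w = z1" "plug H (Var x) = i1"
      using pr(6) unfolding tE inert(1) L1 by (auto simp: prod_eq_iff)
    have "x \<in> nv i1" using eq nv_plug by metis
    then show ?thesis using pr(5) inert(2) by simp
  next
    case (gc P1 z1 t1)
    have eq: "w = z1" "pplug P (Var w, Eps) = pplug P1 (Var y, Eps)"
      using pr(6) unfolding tE gc(1) L1 by (auto simp: prod_eq_iff)
    have "P = P1 \<and> w = y \<and> V = V'"
    proof (rule IH[OF gc(2)])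
      show "w \<notin> pctx_dom P" using hy(3) .
      show "y \<notin> pctx_dom P1" using pr(3) unfolding gc(1) dom_app by simp
      show "y \<notin> V" using pr(4) by simp
      show "w \<notin> V'" using gc(3) eq(1) by simp
    qed (rule eq(2))
    moreover have "y \<noteq> z1" using pr(3) unfolding gc(1) dom_app by simp
    ultimately show ?thesis using eq(1) by simp
  next
    case her2: (her P1 V1 w1 H1)
    have tE1: "pplug (prog_app_ctx (pplug P1 (Var w1, Eps)) w1 H1) (Var y, Eps)
     = (fst (pplug P1 (Var w1, Eps)), ES (snd (pplug P1 (Var w1, Eps))) w1 (plug H1 (Var y)))"
      by (rule pplug_her)
    have eq: "w = w1" "pplug P (Var w, Eps) = pplug P1 (Var w1, Eps)" "plug H (Var x) = plug H1 (Var y)"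
      using pr(6) unfolding tE tE1 her2(1) by (auto simp: prod_eq_iff)
    have "P = P1 \<and> w = w1 \<and> V = V1"
    proof (rule IH[OF her2(3)])
      show "w \<notin> pctx_dom P" using hy(3) .
      show "w1 \<notin> pctx_dom P1" using her2(5) .
      show "w1 \<notin> V" using hy(2) eq(1) by simp
      show "w \<notin> V1" using her2(4) eq(1) by simp
    qed (rule eq(2))
    moreover have "H = H1 \<and> x = y"
    proof (rule head_inj[OF hy(4) her2(6) eq(3)])
      show "y \<notin> nv_ctx H" using pr(4) by simp
      show "x \<notin> nv_ctx H1" using pr(5) her2(2) by simp
    qed
    ultimately show ?thesis using eq(1) her2(1,2) by simp
  qed
qed

theorem mainTheorem1:
  fixes P :: "('v :: {countable, infinite}) pctx"
    and V W :: "'v set"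
  assumes "evctx P V"
    and "evctx P W"
  shows "V = W"
proof -
  have f: "finite (V \<union> W \<union> pctx_dom P)"
    by (intro finite_UnI evctx_fin[OF assms(1)] evctx_fin[OF assms(2)] pctx_dom_fin)
  obtain x :: 'v where x: "x \<notin> V \<union> W \<union> pctx_dom P"
    using arb_element[OF f] by (elim exE)
  have "P = P \<and> x = x \<and> V = W"
  proof (rule main[OF assms(1) assms(2)])
    show "x \<notin> pctx_dom P" using x by simp
    show "x \<notin> pctx_dom P" using x by simp
    show "x \<notin> V" using x by simp
    show "x \<notin> W" using x by simp
  qed (rule refl)
  then show ?thesis by simp
qed

end
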